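(* If $G$ is a CAM group, then $G$ is residually finite.
   Context: Let $G$ be a countable discrete group. A topological $G$-system $(X,T)$ consists of a compact metric space $X$ and an action $T\colon G\to\mathrm{Homeo}(X)$, $g\mapsto T_g$. The system is topologically transitive if for all nonempty open $U,V\subseteq X$ there is $g\in G$ with $T_gU\cap V\neq\emptyset$; the action is faithful if $T_g=\mathrm{id}_X$ only when $g$ is the identity. A point is periodic if its $G$-orbit is finite. The system is chaotic almost minimal (CAM) if: (1) it is topologically transitive and the action is faithful; (2) the periodic points are dense in $X$; (3) every proper closed $T$-invariant subset of $X$ is finite. The group $G$ is a CAM group if there is an infinite compact metric space $X$ and a CAM $G$-system on $X$. A group is residually finite if for every non-identity $g$ there is a homomorphism to a finite group not sending $g$ to the identity. *)

theory Defs
  imports "HOL-Analysis.Analysis" "HOL-Algebra.Group"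
begin

definition topological_G_system :: "('g, 'c) monoid_scheme \<Rightarrow> 'a metric \<Rightarrow> ('g \<Rightarrow> 'a \<Rightarrow> 'a) \<Rightarrow> bool" where
  "topological_G_system G m T \<longleftrightarrow>
     group G \<and> countable (carrier G) \<and> compact_space (mtopology_of m) \<and>
     (\<forall>g\<in>carrier G. homeomorphic_map (mtopology_of m) (mtopology_of m) (T g)) \<and>
     (\<forall>x\<in>mspace m. T \<one>\<^bsub>G\<^esub> x = x) \<and>
     (\<forall>g\<in>carrier G. \<forall>h\<in>carrier G. \<forall>x\<in>mspace m. T (g \<otimes>\<^bsub>G\<^esub> h) x = T g (T h x))"

definition topologically_transitive :: "('g, 'c) monoid_scheme \<Rightarrow> 'a metric \<Rightarrow> ('g \<Rightarrow> 'a \<Rightarrow> 'a) \<Rightarrow> bool" where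
  "topologically_transitive G m T \<longleftrightarrow>
     (\<forall>U V. openin (mtopology_of m) U \<and> openin (mtopology_of m) V \<and> U \<noteq> {} \<and> V \<noteq> {}
        \<longrightarrow> (\<exists>g\<in>carrier G. T g ` U \<inter> V \<noteq> {}))"

definition faithful_action :: "('g, 'c) monoid_scheme \<Rightarrow> 'a metric \<Rightarrow> ('g \<Rightarrow> 'a \<Rightarrow> 'a) \<Rightarrow> bool" where
  "faithful_action G m T \<longleftrightarrow>
     (\<forall>g\<in>carrier G. (\<forall>x\<in>mspace m. T g x = x) \<longrightarrow> g = \<one>\<^bsub>G\<^esub>)"

definition periodic_point :: "('g, 'c) monoid_scheme \<Rightarrow> 'a metric \<Rightarrow> ('g \<Rightarrow> 'a \<Rightarrow> 'a) \<Rightarrow> 'a \<Rightarrow> bool" where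
  "periodic_point G m T x \<longleftrightarrow> x \<in> mspace m \<and> finite ((\<lambda>g. T g x) ` carrier G)"

definition invariant_set :: "('g, 'c) monoid_scheme \<Rightarrow> ('g \<Rightarrow> 'a \<Rightarrow> 'a) \<Rightarrow> 'a set \<Rightarrow> bool" where
  "invariant_set G T A \<longleftrightarrow> (\<forall>g\<in>carrier G. T g ` A \<subseteq> A)"

definition CAM_system :: "('g, 'c) monoid_scheme \<Rightarrow> 'a metric \<Rightarrow> ('g \<Rightarrow> 'a \<Rightarrow> 'a) \<Rightarrow> bool" where
  "CAM_system G m T \<longleftrightarrow>
     topological_G_system G m T \<and>
     topologically_transitive G m T \<and> faithful_action G m T \<and>
     (mtopology_of m) closure_of {x. periodic_point G m T x} = mspace m \<and>
     (\<forall>A. closedin (mtopology_of m) A \<and> A \<noteq> mspace m \<and> invariant_set G T A \<longrightarrow> finite A)"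

text \<open>Residual finiteness; finite target groups are represented on carriers of type nat
  (every finite group is isomorphic to one of these).\<close>
definition residually_finite :: "('g, 'c) monoid_scheme \<Rightarrow> bool" where
  "residually_finite G \<longleftrightarrow>
     (\<forall>g\<in>carrier G. g \<noteq> \<one>\<^bsub>G\<^esub> \<longrightarrow>
        (\<exists>(H :: nat monoid) h. group H \<and> finite (carrier H) \<and> h \<in> hom G H \<and> h g \<noteq> \<one>\<^bsub>H\<^esub>))"

end

theory Submission
  imports Defs
begin

lemma surj_hom_group:
  fixes G (structure)
  assumes G: "group G" and h: "h \<in> hom G H" and s: "h ` carrier G = carrier H"
    and one: "\<one>\<^bsub>H\<^esub> = h \<one>\<^bsub>G\<^esub>"
  shows "group H"
proof (rule groupI)
  have hm: "\<And>x y. x \<in> carrier G \<Longrightarrow> y \<in> carrier G \<Longrightarrow> h (x \<otimes>\<^bsub>G\<^esub> y) = h x \<otimes>\<^bsub>H\<^esub> h y"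
    using h by (simp add: hom_def)
  have hc: "\<And>x. x \<in> carrier G \<Longrightarrow> h x \<in> carrier H" using s by blast
  have ex: "\<And>a. a \<in> carrier H \<Longrightarrow> \<exists>x\<in>carrier G. a = h x" using s by blast
  interpret group G by (rule G)
  show "\<And>x y. x \<in> carrier H \<Longrightarrow> y \<in> carrier H \<Longrightarrow> x \<otimes>\<^bsub>H\<^esub> y \<in> carrier H"
  proof -
    fix x y assume xy: "x \<in> carrier H" "y \<in> carrier H"
    obtain a where "a \<in> carrier G" "x = h a" using ex[OF xy(1)] by blast
    moreover obtain b where "b \<in> carrier G" "y = h b" using ex[OF xy(2)] by blast
    ultimately show "x \<otimes>\<^bsub>H\<^esub> y \<in> carrier H" using hm[of a b] hc[of "a \<otimes> b"] by simp
  qed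
  show "\<one>\<^bsub>H\<^esub> \<in> carrier H" using one hc by simp
  show "\<And>x y z. x \<in> carrier H \<Longrightarrow> y \<in> carrier H \<Longrightarrow> z \<in> carrier H \<Longrightarrow>
      x \<otimes>\<^bsub>H\<^esub> y \<otimes>\<^bsub>H\<^esub> z = x \<otimes>\<^bsub>H\<^esub> (y \<otimes>\<^bsub>H\<^esub> z)"
  proof -
    fix x y z assume xyz: "x \<in> carrier H" "y \<in> carrier H" "z \<in> carrier H"
    obtain a where a: "a \<in> carrier G" "x = h a" using ex[OF xyz(1)] by blast
    obtain b where b: "b \<in> carrier G" "y = h b" using ex[OF xyz(2)] by blast
    obtain c where c: "c \<in> carrier G" "z = h c" using ex[OF xyz(3)] by blast
    note abc = a(1) b(1) c(1) a(2) b(2) c(2)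
    have "x \<otimes>\<^bsub>H\<^esub> y \<otimes>\<^bsub>H\<^esub> z = h (a \<otimes> b \<otimes> c)"
      using abc hm by simp
    also have "\<dots> = h (a \<otimes> (b \<otimes> c))" using abc by (simp add: m_assoc)
    also have "\<dots> = x \<otimes>\<^bsub>H\<^esub> (y \<otimes>\<^bsub>H\<^esub> z)" using abc hm by simp
    finally show "x \<otimes>\<^bsub>H\<^esub> y \<otimes>\<^bsub>H\<^esub> z = x \<otimes>\<^bsub>H\<^esub> (y \<otimes>\<^bsub>H\<^esub> z)" .
  qed
  show "\<And>x. x \<in> carrier H \<Longrightarrow> \<one>\<^bsub>H\<^esub> \<otimes>\<^bsub>H\<^esub> x = x"
  proof -
    fix x assume xH: "x \<in> carrier H"
    obtain a where a: "a \<in> carrier G" "x = h a" using ex[OF xH] by blast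
    have "\<one>\<^bsub>H\<^esub> \<otimes>\<^bsub>H\<^esub> x = h \<one> \<otimes>\<^bsub>H\<^esub> h a" by (simp only: one a(2))
    also have "\<dots> = h (\<one> \<otimes> a)" by (rule hm[symmetric]) (auto simp: a)
    also have "\<dots> = x" using a by (simp only: l_one)
    finally show "\<one>\<^bsub>H\<^esub> \<otimes>\<^bsub>H\<^esub> x = x" .
  qed
  show "\<And>x. x \<in> carrier H \<Longrightarrow> \<exists>y\<in>carrier H. y \<otimes>\<^bsub>H\<^esub> x = \<one>\<^bsub>H\<^esub>"
  proof -
    fix x assume xH: "x \<in> carrier H"
    obtain a where a: "a \<in> carrier G" "x = h a" using ex[OF xH] by blast
    have "h (inv a) \<otimes>\<^bsub>H\<^esub> x = h (inv a) \<otimes>\<^bsub>H\<^esub> h a" by (simp only: a(2))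
    also have "\<dots> = h (inv a \<otimes> a)" by (rule hm[symmetric]) (auto simp: a)
    also have "\<dots> = \<one>\<^bsub>H\<^esub>" using a by (simp only: l_inv one)
    finally have "h (inv a) \<otimes>\<^bsub>H\<^esub> x = \<one>\<^bsub>H\<^esub>" .
    then show "\<exists>y\<in>carrier H. y \<otimes>\<^bsub>H\<^esub> x = \<one>\<^bsub>H\<^esub>" using hc a by blast
  qed
qed

theorem proposition3p1:
  fixes G :: "('g, 'c) monoid_scheme" and m :: "'a metric" and T :: "'g \<Rightarrow> 'a \<Rightarrow> 'a"
  assumes "group G" and "countable (carrier G)"
    and "infinite (mspace m)" and "compact_space (mtopology_of m)"
    and "CAM_system G m T"
  shows "residually_finite G"
  unfolding residually_finite_def
proof (intro ballI impI)
  fix g assume g: "g \<in> carrier G" "g \<noteq> \<one>\<^bsub>G\<^esub>"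
  have sys: "topological_G_system G m T" and fa: "faithful_action G m T"
    and dense: "(mtopology_of m) closure_of {x. periodic_point G m T x} = mspace m"
    using assms(5) unfolding CAM_system_def by auto
  have cont: "\<And>k. k \<in> carrier G \<Longrightarrow> continuous_map (mtopology_of m) (mtopology_of m) (T k)"
    using sys unfolding topological_G_system_def by (meson homeomorphic_imp_continuous_map)
  have Tin: "\<And>k y. k \<in> carrier G \<Longrightarrow> y \<in> mspace m \<Longrightarrow> T k y \<in> mspace m"
    using continuous_map_image_subset_topspace[OF cont] by (simp add: image_subset_iff)
  have T1: "\<And>x. x \<in> mspace m \<Longrightarrow> T \<one>\<^bsub>G\<^esub> x = x"
    and Tm: "\<And>k l x. k \<in> carrier G \<Longrightarrow> l \<in> carrier G \<Longrightarrow> x \<in> mspace m \<Longrightarrow>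
        T (k \<otimes>\<^bsub>G\<^esub> l) x = T k (T l x)"
    using sys unfolding topological_G_system_def by auto
  obtain x where x: "x \<in> mspace m" "T g x \<noteq> x"
    using fa g unfolding faithful_action_def by blast
  define U where "U = mspace m - {y \<in> topspace (mtopology_of m). T g y = id y}"
  have "Hausdorff_space (mtopology_of m)"
    by (simp add: Metric_space.Hausdorff_space_mtopology mtopology_of_def)
  then have "closedin (mtopology_of m) {y \<in> topspace (mtopology_of m). T g y = id y}"
    by (rule closedin_continuous_maps_eq[OF _ cont[OF g(1)] continuous_map_id])
  then have oU: "openin (mtopology_of m) U"
    unfolding U_def by (metis openin_diff openin_topspace topspace_mtopology_of)
  have "x \<in> U \<inter> mtopology_of m closure_of {x. periodic_point G m T x}"
    using x dense unfolding U_def by auto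
  then have "U \<inter> {x. periodic_point G m T x} \<noteq> {}"
    using openin_Int_closure_of_eq_empty[OF oU] by blast
  then obtain p where p: "periodic_point G m T p" "T g p \<noteq> p" "p \<in> mspace m"
    unfolding U_def periodic_point_def by auto
  define Orb where "Orb = (\<lambda>k. T k p) ` carrier G"
  have fO: "finite Orb" using p unfolding Orb_def periodic_point_def by simp
  have Osub: "Orb \<subseteq> mspace m" using Tin p unfolding Orb_def by auto
  have Oinv: "\<And>k y. k \<in> carrier G \<Longrightarrow> y \<in> Orb \<Longrightarrow> T k y \<in> Orb"
  proof -
    fix k y assume k: "k \<in> carrier G" and "y \<in> Orb"
    then obtain l where l: "l \<in> carrier G" "y = T l p" unfolding Orb_def by auto
    then have "T k y = T (k \<otimes>\<^bsub>G\<^esub> l) p" using Tm k p by simp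
    then show "T k y \<in> Orb" unfolding Orb_def using k l assms(1) by (simp add: group.is_monoid monoid.m_closed)
  qed
  have pO: "p \<in> Orb" unfolding Orb_def using T1 p assms(1)
    by (metis group.is_monoid image_eqI monoid.one_closed)
  define \<phi> where "\<phi> k = restrict (T k) Orb" for k
  define Im where "Im = \<phi> ` carrier G"
  have "Im \<subseteq> Orb \<rightarrow>\<^sub>E Orb" unfolding Im_def \<phi>_def using Oinv by auto
  then have fIm: "finite Im" using fO by (meson finite_PiE finite_subset)
  obtain enc :: "('a \<Rightarrow> 'a) \<Rightarrow> nat" where enc: "inj_on enc Im"
    using fIm by (meson finite_imp_inj_to_nat_seg)
  define dec where "dec = inv_into Im enc"
  have decenc: "\<And>k. k \<in> carrier G \<Longrightarrow> dec (enc (\<phi> k)) = \<phi> k"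
    unfolding dec_def Im_def using enc Im_def by (simp add: inv_into_f_f)
  have \<phi>m: "\<And>k l. k \<in> carrier G \<Longrightarrow> l \<in> carrier G \<Longrightarrow>
      \<phi> (k \<otimes>\<^bsub>G\<^esub> l) = compose Orb (\<phi> k) (\<phi> l)"
    unfolding \<phi>_def compose_def using Tm Osub Oinv by (auto intro!: ext)
  define H :: "nat monoid" where
    "H = \<lparr>carrier = enc ` Im, mult = (\<lambda>a b. enc (compose Orb (dec a) (dec b))), one = enc (\<phi> \<one>\<^bsub>G\<^esub>)\<rparr>"
  define h where "h k = enc (\<phi> k)" for k
  have hom: "h \<in> hom G H"
    unfolding hom_def H_def h_def Im_def using \<phi>m decenc assms(1)
    by (auto simp: group.is_monoid monoid.m_closed)
  have surj: "h ` carrier G = carrier H" unfolding H_def h_def Im_def by auto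
  have grp: "group H"
    by (rule surj_hom_group[OF assms(1) hom surj]) (simp add: H_def h_def)
  have "\<phi> g \<noteq> \<phi> \<one>\<^bsub>G\<^esub>"
  proof
    assume "\<phi> g = \<phi> \<one>\<^bsub>G\<^esub>"
    then have "\<phi> g p = \<phi> \<one>\<^bsub>G\<^esub> p" by simp
    then show False using pO p T1 unfolding \<phi>_def by simp
  qed
  then have "h g \<noteq> \<one>\<^bsub>H\<^esub>"
    unfolding h_def H_def using enc g assms(1) unfolding Im_def
    by (simp add: inj_on_eq_iff group.is_monoid monoid.one_closed)
  moreover have "finite (carrier H)" using fIm unfolding H_def by simp
  ultimately show "\<exists>(H :: nat monoid) h. group H \<and> finite (carrier H) \<and> h \<in> hom G H \<and> h g \<noteq> \<one>\<^bsub>H\<^esub>"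
    using grp hom by blast
qed

end
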